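(* Let $\mathsf{X}\subset\mathbb{R}^d$ be compact, contained in the ball of radius $R$ centered at the origin, and let $\alpha,\beta\in\mathcal{M}_+(\mathsf{X})$. Then $\mathrm{SUOT}(\alpha,\beta)\le\mathrm{USOT}(\alpha,\beta)$.
   Context: Fix entropy functions $\varphi_1,\varphi_2$ (convex, l.s.c., domain in $[0,\infty)$, $\varphi(1)=0$) and a cost $\mathrm{C}_1$ on $\mathbb{R}\times\mathbb{R}$. $\mathrm{D}_\varphi(\mu|\nu)=\int\varphi(\frac{d\mu}{d\nu})d\nu+\varphi'_\infty\mu^\perp(\mathbb{R}^s)$, $\varphi'_\infty=\lim\varphi(x)/x$. $\mathrm{UOT}(\mu,\nu)=\inf_{\pi\ge0}\int\mathrm{C}_1d\pi+\mathrm{D}_{\varphi_1}(\pi_1|\mu)+\mathrm{D}_{\varphi_2}(\pi_2|\nu)$ for measures on $\mathbb{R}$ ($\pi_1,\pi_2$ marginals), $\mathrm{OT}$ the balanced version. With $\boldsymbol\sigma$ uniform on $\mathbb{S}^{d-1}$, $\theta^\star(x)=\langle\theta,x\rangle$: $\mathrm{SOT}(\alpha,\beta)=\int\mathrm{OT}(\theta^\star_\sharp\alpha,\theta^\star_\sharp\beta)d\boldsymbol\sigma$, $\mathrm{SUOT}(\alpha,\beta)=\int\mathrm{UOT}(\theta^\star_\sharp\alpha,\theta^\star_\sharp\beta)d\boldsymbol\sigma$, $\mathrm{USOT}(\alpha,\beta)=\inf_{\pi_1,\pi_2\in\mathcal{M}_+(\mathbb{R}^d)}\mathrm{SOT}(\pi_1,\pi_2)+\mathrm{D}_{\varphi_1}(\pi_1|\alpha)+\mathrm{D}_{\varphi_2}(\pi_2|\beta)$.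 *)

theory Defs
  imports "HOL-Analysis.Analysis"
begin

text \<open>Entropy functions: convex, lower semicontinuous on the domain [0,\<infinity>),
  values in [0,\<infinity>], normalised by phi 1 = 0. Only the values on [0,\<infinity>) matter
  (the domain of phi lies in [0,\<infinity>)).\<close>
definition entropy_function :: "(real \<Rightarrow> ennreal) \<Rightarrow> bool" where
  "entropy_function \<phi> \<longleftrightarrow>
     (\<forall>x y t. 0 \<le> x \<longrightarrow> 0 \<le> y \<longrightarrow> 0 \<le> t \<longrightarrow> t \<le> 1 \<longrightarrow>
        \<phi> (t * x + (1 - t) * y) \<le> ennreal t * \<phi> x + ennreal (1 - t) * \<phi> y) \<and>
     (\<forall>c. closed {x. 0 \<le> x \<and> \<phi> x \<le> c}) \<and>
     \<phi> 1 = 0"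

definition phi_inf :: "(real \<Rightarrow> ennreal) \<Rightarrow> ennreal" where
  "phi_inf \<phi> = Liminf at_top (\<lambda>x. \<phi> x / ennreal x)"

text \<open>Csiszar divergence D_phi(mu|nu) = \<integral> phi(d mu/d nu) d nu + phi'_infinity mu^perp(total),
  using the Lebesgue decomposition mu = f nu + mu restricted to a nu-null set S.
  (The value does not depend on the chosen decomposition.)\<close>
definition divergence :: "(real \<Rightarrow> ennreal) \<Rightarrow> 'b measure \<Rightarrow> 'b measure \<Rightarrow> ennreal" where
  "divergence \<phi> \<mu> \<nu> = Inf {(\<integral>\<^sup>+ x. \<phi> (f x) \<partial>\<nu>) + phi_inf \<phi> * emeasure \<mu> S | f S.
      f \<in> borel_measurable \<nu> \<and> (\<forall>x. 0 \<le> f x) \<and> S \<in> sets \<nu> \<and> emeasure \<nu> S = 0 \<and>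
      (\<forall>A \<in> sets \<mu>. emeasure \<mu> (A - S) = (\<integral>\<^sup>+ x\<in>A. ennreal (f x) \<partial>\<nu>))}"

definition finite_borel_measures :: "'a::topological_space measure set" where
  "finite_borel_measures = {M. sets M = sets borel \<and> emeasure M (space M) < \<infinity>}"

definition OT :: "(real \<times> real \<Rightarrow> ennreal) \<Rightarrow> real measure \<Rightarrow> real measure \<Rightarrow> ennreal" where
  "OT C \<mu> \<nu> = Inf {(\<integral>\<^sup>+ z. C z \<partial>\<pi>) | \<pi>. \<pi> \<in> finite_borel_measures \<and>
      distr \<pi> borel fst = \<mu> \<and> distr \<pi> borel snd = \<nu>}"

definition UOT :: "(real \<times> real \<Rightarrow> ennreal) \<Rightarrow> (real \<Rightarrow> ennreal) \<Rightarrow> (real \<Rightarrow> ennreal)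
    \<Rightarrow> real measure \<Rightarrow> real measure \<Rightarrow> ennreal" where
  "UOT C \<phi>1 \<phi>2 \<mu> \<nu> = Inf {(\<integral>\<^sup>+ z. C z \<partial>\<pi>) + divergence \<phi>1 (distr \<pi> borel fst) \<mu>
      + divergence \<phi>2 (distr \<pi> borel snd) \<nu> | \<pi>. \<pi> \<in> finite_borel_measures}"

text \<open>Uniform probability measure on the unit sphere S^{d-1}: image of the normalised
  Lebesgue measure on the unit ball under radial projection (equivalently, normalised
  surface measure).\<close>
definition unif_sphere :: "'a::euclidean_space measure" where
  "unif_sphere = distr (uniform_measure lborel (ball 0 1)) borel (\<lambda>x. x /\<^sub>R norm x)"

definition proj :: "'a::euclidean_space \<Rightarrow> 'a measure \<Rightarrow> real measure" where
  "proj \<theta> \<mu> = distr \<mu> borel (\<lambda>x. \<theta> \<bullet> x)"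

definition SOT :: "(real \<times> real \<Rightarrow> ennreal) \<Rightarrow> 'a::euclidean_space measure \<Rightarrow> 'a measure \<Rightarrow> ennreal" where
  "SOT C \<alpha> \<beta> = (\<integral>\<^sup>+ \<theta>. OT C (proj \<theta> \<alpha>) (proj \<theta> \<beta>) \<partial>unif_sphere)"

definition SUOT :: "(real \<times> real \<Rightarrow> ennreal) \<Rightarrow> (real \<Rightarrow> ennreal) \<Rightarrow> (real \<Rightarrow> ennreal)
    \<Rightarrow> 'a::euclidean_space measure \<Rightarrow> 'a measure \<Rightarrow> ennreal" where
  "SUOT C \<phi>1 \<phi>2 \<alpha> \<beta> = (\<integral>\<^sup>+ \<theta>. UOT C \<phi>1 \<phi>2 (proj \<theta> \<alpha>) (proj \<theta> \<beta>) \<partial>unif_sphere)"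

definition USOT :: "(real \<times> real \<Rightarrow> ennreal) \<Rightarrow> (real \<Rightarrow> ennreal) \<Rightarrow> (real \<Rightarrow> ennreal)
    \<Rightarrow> 'a::euclidean_space measure \<Rightarrow> 'a measure \<Rightarrow> ennreal" where
  "USOT C \<phi>1 \<phi>2 \<alpha> \<beta> = Inf {SOT C \<pi>1 \<pi>2 + divergence \<phi>1 \<pi>1 \<alpha> + divergence \<phi>2 \<pi>2 \<beta> | \<pi>1 \<pi>2.
      \<pi>1 \<in> finite_borel_measures \<and> \<pi>2 \<in> finite_borel_measures}"

end

theory Submission
  imports Defs
begin

lemma entropy_measurable:
  assumes "entropy_function \<phi>" "f \<in> borel_measurable M" "\<And>x. 0 \<le> f x"
  shows "(\<lambda>x. \<phi> (f x)) \<in> borel_measurable M"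
proof (rule borel_measurableI_le)
  fix y
  have cl: "closed {t. 0 \<le> t \<and> \<phi> t \<le> y}" using assms(1) unfolding entropy_function_def by blast
  have "{x\<in>space M. \<phi> (f x) \<le> y} = f -` {t. 0 \<le> t \<and> \<phi> t \<le> y} \<inter> space M"
    using assms(3) by auto
  also have "\<dots> \<in> sets M"
    by (rule measurable_sets[OF assms(2)]) (simp add: borel_closed cl)
  finally show "{x\<in>space M. \<phi> (f x) \<le> y} \<in> sets M" .
qed



lemma null_max_set:
  assumes fin: "finite_measure P" and sets: "sets Q = sets P"
  shows "\<exists>S\<in>sets Q. emeasure Q S = 0 \<and> (\<forall>B\<in>sets Q. emeasure Q B = 0 \<longrightarrow> emeasure P (B - S) = 0)"
proof -
  have ne: "null_sets Q \<noteq> {}" by blast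
  obtain f :: "nat \<Rightarrow> ennreal" where f: "range f \<subseteq> emeasure P ` null_sets Q" "Sup (emeasure P ` null_sets Q) = Sup (range f)"
    using ennreal_SUP_countable_SUP[OF ne, of "emeasure P"] by blast
  have "\<forall>n. \<exists>B. B \<in> null_sets Q \<and> f n = emeasure P B" using f(1) by blast
  then obtain B where B: "\<And>n. B n \<in> null_sets Q" "\<And>n. f n = emeasure P (B n)" by metis
  define S where "S = (\<Union>n. B n)"
  have S: "S \<in> null_sets Q" using B by (auto simp: S_def)
  have SP: "S \<in> sets P" using S sets by (auto simp: null_sets_def)
  have Smax: "emeasure P S = Sup (emeasure P ` null_sets Q)"
  proof (rule antisym)
    show "emeasure P S \<le> Sup (emeasure P ` null_sets Q)" using S by (auto intro: Sup_upper)
    show "Sup (emeasure P ` null_sets Q) \<le> emeasure P S" unfolding f(2)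
    proof (rule SUP_least)
      fix n show "f n \<le> emeasure P S" unfolding B(2)
        by (rule emeasure_mono[OF _ SP]) (auto simp: S_def)
    qed
  qed
  show ?thesis
  proof (intro bexI conjI ballI impI)
    fix C assume C: "C \<in> sets Q" "emeasure Q C = 0"
    then have "S \<union> C \<in> null_sets Q" using S by auto
    then have le: "emeasure P (S \<union> C) \<le> emeasure P S" using Smax by (auto intro: Sup_upper)
    have CP: "C \<in> sets P" using C sets by auto
    have eq: "emeasure P (S \<union> C) = emeasure P S + emeasure P (C - S)"
      using plus_emeasure[of S P "C - S"] SP CP by (simp add: Un_Diff_cancel)
    have "emeasure P S \<noteq> \<infinity>" using fin by (simp add: finite_measure.emeasure_finite)
    then show "emeasure P (C - S) = 0" using le eq
      by (metis add.right_neutral add_le_cancel_left ennreal_add_left_cancel_le le_zero_eq)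
  qed (use S in auto)
qed



lemma ennreal_add_le_self: "(a::ennreal) + b \<le> a \<Longrightarrow> a \<noteq> \<infinity> \<Longrightarrow> b = 0"
  using ennreal_add_left_cancel_le[of a b 0] by simp

lemma AE_le_from_set_integrals:
  assumes u: "u \<in> borel_measurable Q" and v: "v \<in> borel_measurable Q"
    and fin: "(\<integral>\<^sup>+x. u x \<partial>Q) \<noteq> \<infinity>"
    and le: "\<And>B. B \<in> sets Q \<Longrightarrow> (\<integral>\<^sup>+x. u x * indicator B x \<partial>Q) \<le> (\<integral>\<^sup>+x. v x * indicator B x \<partial>Q)"
  shows "AE x in Q. u x \<le> v x"
proof -
  define B where "B = {x\<in>space Q. v x < u x}"
  have Bm: "B \<in> sets Q" unfolding B_def by (rule borel_measurable_less[OF v u])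
  note [measurable] = u v Bm
  have "(\<integral>\<^sup>+x. u x * indicator B x \<partial>Q) = (\<integral>\<^sup>+x. v x * indicator B x + (u x - v x) * indicator B x \<partial>Q)"
    by (intro nn_integral_cong) (auto simp: B_def add_diff_self_ennreal split: split_indicator)
  also have "\<dots> = (\<integral>\<^sup>+x. v x * indicator B x \<partial>Q) + (\<integral>\<^sup>+x. (u x - v x) * indicator B x \<partial>Q)"
    by (rule nn_integral_add) measurable
  finally have eq: "(\<integral>\<^sup>+x. u x * indicator B x \<partial>Q) = (\<integral>\<^sup>+x. v x * indicator B x \<partial>Q) + (\<integral>\<^sup>+x. (u x - v x) * indicator B x \<partial>Q)" .
  have "(\<integral>\<^sup>+x. u x * indicator B x \<partial>Q) \<le> (\<integral>\<^sup>+x. u x \<partial>Q)"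
    by (intro nn_integral_mono) (auto split: split_indicator)
  moreover have "(\<integral>\<^sup>+x. v x * indicator B x \<partial>Q) \<le> (\<integral>\<^sup>+x. u x * indicator B x \<partial>Q)"
    unfolding eq by simp
  ultimately have finB: "(\<integral>\<^sup>+x. v x * indicator B x \<partial>Q) \<noteq> \<infinity>" using fin
    by (simp add: top_unique) (metis order_trans top.extremum_unique)
  have "(\<integral>\<^sup>+x. (u x - v x) * indicator B x \<partial>Q) = 0"
    by (rule ennreal_add_le_self[OF _ finB]) (use le[OF Bm] eq in simp)
  then have "AE x in Q. (u x - v x) * indicator B x = 0"
    by (subst nn_integral_0_iff_AE[symmetric]) measurable
  then show ?thesis
    using AE_space
  proof eventually_elim
    case (elim x)
    show "u x \<le> v x"
    proof (rule ccontr)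
      assume "\<not> u x \<le> v x"
      then have vu: "v x < u x" by simp
      then have "x \<in> B" using elim(2) by (simp add: B_def)
      then have "u x - v x = 0" using elim(1) by simp
      then show False using vu by (auto simp: diff_eq_0_iff_ennreal)
    qed
  qed
qed



lemma minorant_slope:
  assumes "\<forall>t\<ge>0. ennreal (a*t + b) \<le> \<phi> t"
  shows "ennreal a \<le> phi_inf \<phi>"
proof -
  have "((\<lambda>t::real. a + b / t) \<longlongrightarrow> a + 0) at_top"
    by (intro tendsto_add tendsto_const tendsto_divide_0[OF tendsto_const]
        filterlim_at_top_imp_at_infinity filterlim_ident)
  then have lim: "((\<lambda>t. ennreal (a + b / t)) \<longlongrightarrow> ennreal a) at_top"
    by (intro tendsto_ennrealI) simp
  have ev: "eventually (\<lambda>t. ennreal (a + b / t) \<le> \<phi> t / ennreal t) at_top"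
    using eventually_gt_at_top[of "0::real"]
  proof eventually_elim
    case (elim t)
    have "ennreal (a + b / t) = ennreal (a*t + b) / ennreal t"
    proof (cases "0 \<le> a*t + b")
      case True then show ?thesis using elim by (simp add: divide_ennreal field_simps)
    next
      case False
      then have "a + b / t < 0" using elim by (simp add: field_simps)
      then show ?thesis using False by (simp add: ennreal_neg)
    qed
    also have "\<dots> \<le> \<phi> t / ennreal t"
      using assms elim by (intro divide_right_mono_ennreal) auto
    finally show ?case .
  qed
  have "ennreal a = Liminf at_top (\<lambda>t. ennreal (a + b / t))"
    using lim by (simp add: lim_imp_Liminf)
  also have "\<dots> \<le> Liminf at_top (\<lambda>t. \<phi> t / ennreal t)"
    using ev by (rule Liminf_mono)
  finally show ?thesis unfolding phi_inf_def .
qed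




lemma epi_closed_convex:
  assumes "entropy_function \<phi>"
  shows "convex {p::real\<times>real. 0 \<le> fst p \<and> 0 \<le> snd p \<and> \<phi> (fst p) \<le> ennreal (snd p)}"
    and "closed {p::real\<times>real. 0 \<le> fst p \<and> 0 \<le> snd p \<and> \<phi> (fst p) \<le> ennreal (snd p)}"
proof -
  let ?E = "{p::real\<times>real. 0 \<le> fst p \<and> 0 \<le> snd p \<and> \<phi> (fst p) \<le> ennreal (snd p)}"
  have cv: "\<phi> (t * x + (1 - t) * y) \<le> ennreal t * \<phi> x + ennreal (1 - t) * \<phi> y"
    if "0 \<le> x" "0 \<le> y" "0 \<le> t" "t \<le> 1" for x y t
    using assms that unfolding entropy_function_def by blast
  have lsc: "closed {x. 0 \<le> x \<and> \<phi> x \<le> c}" for c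
    using assms unfolding entropy_function_def by blast
  show "convex ?E"
  proof (rule convexI)
    fix x y :: "real \<times> real" and u v :: real
    assume hx: "x \<in> ?E" and hy: "y \<in> ?E" and hu: "0 \<le> u" "0 \<le> v" "u + v = 1"
    obtain t1 s1 where x: "x = (t1, s1)" by (cases x)
    obtain t2 s2 where y: "y = (t2, s2)" by (cases y)
    have h: "0 \<le> t1" "0 \<le> s1" "\<phi> t1 \<le> ennreal s1" "0 \<le> t2" "0 \<le> s2" "\<phi> t2 \<le> ennreal s2"
      "0 \<le> u" "0 \<le> v" "u + v = 1"
      using hx hy hu x y by auto
    have v: "v = 1 - u" using h by simp
    have "\<phi> (u * t1 + v * t2) \<le> ennreal u * \<phi> t1 + ennreal v * \<phi> t2"
      using cv[of t1 t2 u] h v by simp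
    also have "\<dots> \<le> ennreal u * ennreal s1 + ennreal v * ennreal s2"
      using h by (intro add_mono mult_left_mono) auto
    also have "\<dots> = ennreal (u * s1 + v * s2)"
      using h by (simp add: ennreal_plus ennreal_mult)
    finally show "u *\<^sub>R x + v *\<^sub>R y \<in> ?E"
      using h x y by simp
  qed
  have eq: "?E = {p. 0 \<le> fst p} \<inter> {p. 0 \<le> snd p} \<inter>
      (\<Inter>c. {p. c \<le> snd p} \<union> ({x. 0 \<le> x \<and> \<phi> x \<le> ennreal c} \<times> UNIV))"
  proof (intro set_eqI iffI)
    fix p :: "real \<times> real" assume "p \<in> ?E"
    then show "p \<in> {p. 0 \<le> fst p} \<inter> {p. 0 \<le> snd p} \<inter>
      (\<Inter>c. {p. c \<le> snd p} \<union> ({x. 0 \<le> x \<and> \<phi> x \<le> ennreal c} \<times> UNIV))"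
      by (cases p) (auto intro: order_trans ennreal_leI)
  next
    fix p :: "real \<times> real"
    assume p: "p \<in> {p. 0 \<le> fst p} \<inter> {p. 0 \<le> snd p} \<inter>
      (\<Inter>c. {p. c \<le> snd p} \<union> ({x. 0 \<le> x \<and> \<phi> x \<le> ennreal c} \<times> UNIV))"
    obtain t s where ts: "p = (t, s)" by (cases p)
    have "\<phi> t \<le> ennreal s"
    proof (rule ccontr)
      assume "\<not> \<phi> t \<le> ennreal s"
      then have "ennreal s < \<phi> t" by simp
      then obtain z where z: "ennreal s < z" "z < \<phi> t" using dense by blast
      then have "z < top" using top.extremum_strict by (metis order.strict_trans2 top_greatest)
      then obtain c where c: "z = ennreal c" "0 \<le> c" by (cases z rule: ennreal_cases) auto
      have "s < c" using z(1) c p ts by (simp add: ennreal_less_iff)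
      moreover have "\<forall>x. x \<le> s \<or> \<phi> t \<le> ennreal x" using p ts by auto
      ultimately have "\<phi> t \<le> ennreal c" by (meson not_le)
      then show False using z c by simp
    qed
    then show "p \<in> ?E" using p ts by auto
  qed
  have cl1: "closed {p::real\<times>real. c \<le> snd p}" for c
    by (intro closed_Collect_le continuous_intros)
  have cl2: "closed {p::real\<times>real. 0 \<le> fst p}"
    by (intro closed_Collect_le continuous_intros)
  show "closed ?E"
    unfolding eq
    by (intro closed_Int closed_INT ballI closed_Un closed_Times lsc cl1 cl2 closed_UNIV)
qed


lemma minorant_exists:
  assumes phi: "entropy_function \<phi>" and x0: "0 \<le> x0" and c: "0 \<le> c" "ennreal c < \<phi> x0"
  shows "\<exists>a b. (\<forall>t\<ge>0. ennreal (a*t + b) \<le> \<phi> t) \<and> c < a*x0 + b"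
proof -
  let ?E = "{p::real\<times>real. 0 \<le> fst p \<and> 0 \<le> snd p \<and> \<phi> (fst p) \<le> ennreal (snd p)}"
  have notin: "(x0, c) \<notin> ?E" using c by auto
  obtain w d where wd: "inner w (x0, c) < d" "\<forall>p\<in>?E. inner w p > d"
    using separating_hyperplane_closed_point[OF epi_closed_convex[OF phi] notin] by blast
  obtain a1 a2 where w: "w = (a1, a2)" by (cases w)
  have one: "\<phi> 1 = 0" using phi unfolding entropy_function_def by blast
  have E1: "d < a1 + a2 * s" if "0 \<le> s" for s
    using wd(2)[rule_format, of "(1, s)"] one that w by (simp add: inner_Pair)
  have Et: "d < a1 * t + a2 * enn2real (\<phi> t)" if "0 \<le> t" "\<phi> t \<noteq> \<infinity>" for t
    using wd(2)[rule_format, of "(t, enn2real (\<phi> t))"] that w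
    by (simp add: inner_Pair ennreal_enn2real_if)
  have x0c: "a1 * x0 + a2 * c < d" using wd(1) w by (simp add: inner_Pair)
  have a2: "0 \<le> a2"
  proof (rule ccontr)
    assume "\<not> 0 \<le> a2"
    then have neg: "a2 < 0" by simp
    define s where "s = (\<bar>a1\<bar> + \<bar>d\<bar>) / (- a2)"
    have "0 \<le> s" unfolding s_def using neg by (intro divide_nonneg_pos) auto
    moreover have "a2 * s = - (\<bar>a1\<bar> + \<bar>d\<bar>)" using neg by (simp add: s_def)
    ultimately show False using E1[of s] by linarith
  qed
  show ?thesis
  proof (cases "a2 = 0")
    case False
    then have pos: "0 < a2" using a2 by simp
    show ?thesis
    proof (intro exI conjI allI impI)
      fix t :: real assume t: "0 \<le> t"
      show "ennreal ((- a1 / a2) * t + d / a2) \<le> \<phi> t"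
      proof (cases "\<phi> t = \<infinity>")
        case True then show ?thesis by simp
      next
        case False
        have "d < a1 * t + a2 * enn2real (\<phi> t)" using Et[OF t False] .
        then have "(- a1 / a2) * t + d / a2 < enn2real (\<phi> t)"
          using pos by (simp add: field_simps)
        then have "ennreal ((- a1 / a2) * t + d / a2) \<le> ennreal (enn2real (\<phi> t))"
          by (intro ennreal_leI) simp
        then show ?thesis using False by (simp add: ennreal_enn2real_if)
      qed
    next
      show "c < (- a1 / a2) * x0 + d / a2" using x0c pos by (simp add: field_simps)
    qed
  next
    case True
    then have gap: "0 < d - a1 * x0" using x0c by simp
    define M where "M = (c + 1) / (d - a1 * x0)"
    have M: "0 < M" using gap c by (simp add: M_def)
    have MM: "M * (d - a1 * x0) = c + 1" using gap by (simp add: M_def)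
    show ?thesis
    proof (intro exI conjI allI impI)
      fix t :: real assume t: "0 \<le> t"
      show "ennreal ((- M * a1) * t + M * d) \<le> \<phi> t"
      proof (cases "\<phi> t = \<infinity>")
        case True then show ?thesis by simp
      next
        case False
        have "d < a1 * t" using Et[OF t False] True by simp
        then have "M * d < M * (a1 * t)" using M by simp
        then have "(- M * a1) * t + M * d < 0" by (simp add: algebra_simps)
        then show ?thesis by (simp add: ennreal_neg)
      qed
    next
      show "c < (- M * a1) * x0 + M * d" using MM by (simp add: algebra_simps)
    qed
  qed
qed

lemma phi_le_from_minorants:
  assumes phi: "entropy_function \<phi>" and x0: "0 \<le> x0"
    and H: "\<And>q1 q2. (\<forall>t\<ge>0. ennreal (real_of_rat q1 * t + real_of_rat q2) \<le> \<phi> t) \<Longrightarrow>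
              ennreal (real_of_rat q1 * x0 + real_of_rat q2) \<le> z"
  shows "\<phi> x0 \<le> z"
proof (rule ccontr)
  assume "\<not> \<phi> x0 \<le> z"
  then have "z < \<phi> x0" by simp
  then obtain y where y: "z < y" "y < \<phi> x0" using dense by blast
  then have "y < top" by (metis order.strict_trans2 top_greatest)
  then obtain c where c: "y = ennreal c" "0 \<le> c" by (cases y rule: ennreal_cases) auto
  obtain a b where ab: "\<forall>t\<ge>0. ennreal (a*t + b) \<le> \<phi> t" "c < a*x0 + b"
    using minorant_exists[OF phi x0 c(2)] y c by auto
  define \<delta> where "\<delta> = a*x0 + b - c"
  have \<delta>: "0 < \<delta>" using ab by (simp add: \<delta>_def)
  obtain r2 where r2: "r2 \<in> \<rat>" "b - \<delta>/2 < r2" "r2 < b"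
    using Rats_dense_in_real[of "b - \<delta>/2" b] \<delta> by auto
  obtain r1 where r1: "r1 \<in> \<rat>" "a - \<delta>/(2*(x0+1)) < r1" "r1 < a"
    using Rats_dense_in_real[of "a - \<delta>/(2*(x0+1))" a] \<delta> x0 by auto
  obtain q1 where q1: "r1 = real_of_rat q1" using r1(1) by (cases rule: Rats_cases) auto
  obtain q2 where q2: "r2 = real_of_rat q2" using r2(1) by (cases rule: Rats_cases) auto
  have minor: "\<forall>t\<ge>0. ennreal (real_of_rat q1 * t + real_of_rat q2) \<le> \<phi> t"
  proof (intro allI impI)
    fix t :: real assume t: "0 \<le> t"
    have "r1 * t \<le> a * t" using r1 t by (intro mult_right_mono) auto
    then have "ennreal (r1 * t + r2) \<le> ennreal (a*t + b)" using r2 by (intro ennreal_leI) simp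
    also have "\<dots> \<le> \<phi> t" using ab t by auto
    finally show "ennreal (real_of_rat q1 * t + real_of_rat q2) \<le> \<phi> t" using q1 q2 by simp
  qed
  have "(a - r1) * x0 \<le> \<delta>/(2*(x0+1)) * x0" using r1 x0 by (intro mult_right_mono) auto
  also have "\<dots> \<le> \<delta>/2"
  proof -
    have "\<delta>/(2*(x0+1)) * x0 = \<delta>/2 * (x0/(x0+1))" using x0 by (simp add: field_simps)
    also have "\<dots> \<le> \<delta>/2 * 1" using x0 \<delta> by (intro mult_left_mono) auto
    finally show ?thesis by simp
  qed
  finally have A: "(a - r1) * x0 \<le> \<delta>/2" .
  then have "a*x0 - r1*x0 \<le> \<delta>/2" by (simp add: algebra_simps)
  then have "c < r1 * x0 + r2" using r2(2) unfolding \<delta>_def by (simp add: field_simps)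
  then have "ennreal c < ennreal (r1 * x0 + r2)" using c by (simp add: ennreal_less_iff)
  then have "z < ennreal (real_of_rat q1 * x0 + real_of_rat q2)" using y c q1 q2 by simp
  with H[OF minor] show False by simp
qed



lemma minorant_split:
  fixes a b t :: real
  assumes "ennreal (a*t + b) \<le> z" "0 \<le> t"
  shows "ennreal (max a 0) * ennreal t + ennreal (max b 0)
         \<le> z + (ennreal (max (-a) 0) * ennreal t + ennreal (max (-b) 0))"
proof -
  have e1: "ennreal (max a 0) * ennreal t + ennreal (max b 0) = ennreal (max a 0 * t + max b 0)"
    using assms(2) by (simp add: ennreal_mult ennreal_plus)
  have e2: "ennreal (max (-a) 0) * ennreal t + ennreal (max (-b) 0) = ennreal (max (-a) 0 * t + max (-b) 0)"
    using assms(2) by (simp add: ennreal_mult ennreal_plus)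
  have sum: "max a 0 * t + max b 0 = (a*t + b) + (max (-a) 0 * t + max (-b) 0)"
    by (simp add: max_def algebra_simps)
  have nn: "0 \<le> max (-a) 0 * t + max (-b) 0" using assms(2) by simp
  show ?thesis
  proof (cases "0 \<le> a*t + b")
    case True
    have "ennreal (max a 0 * t + max b 0) = ennreal (a*t + b) + ennreal (max (-a) 0 * t + max (-b) 0)"
      unfolding sum using True nn by (rule ennreal_plus)
    also have "\<dots> \<le> z + ennreal (max (-a) 0 * t + max (-b) 0)"
      using assms(1) by (rule add_right_mono)
    finally show ?thesis unfolding e1 e2 .
  next
    case False
    have "ennreal (max a 0 * t + max b 0) \<le> ennreal (max (-a) 0 * t + max (-b) 0)"
      using False by (intro ennreal_leI) (simp add: sum)
    also have "\<dots> \<le> z + ennreal (max (-a) 0 * t + max (-b) 0)" by simp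
    finally show ?thesis unfolding e1 e2 .
  qed
qed

lemma minorant_unsplit:
  fixes a b t :: real
  assumes "ennreal (max a 0) * ennreal t + ennreal (max b 0)
         \<le> z + (ennreal (max (-a) 0) * ennreal t + ennreal (max (-b) 0))" "0 \<le> t"
  shows "ennreal (a*t + b) \<le> z"
proof (cases "0 \<le> a*t + b")
  case False then show ?thesis by (simp add: ennreal_neg)
next
  case True
  have e1: "ennreal (max a 0) * ennreal t + ennreal (max b 0) = ennreal (max a 0 * t + max b 0)"
    using assms(2) by (simp add: ennreal_mult ennreal_plus)
  have e2: "ennreal (max (-a) 0) * ennreal t + ennreal (max (-b) 0) = ennreal (max (-a) 0 * t + max (-b) 0)"
    using assms(2) by (simp add: ennreal_mult ennreal_plus)
  have sum: "max a 0 * t + max b 0 = (a*t + b) + (max (-a) 0 * t + max (-b) 0)"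
    by (simp add: max_def algebra_simps)
  have nn: "0 \<le> max (-a) 0 * t + max (-b) 0" using assms(2) by simp
  have "ennreal (a*t + b) + ennreal (max (-a) 0 * t + max (-b) 0) \<le> z + ennreal (max (-a) 0 * t + max (-b) 0)"
    using assms(1) unfolding e1 e2 sum using True nn by (simp add: ennreal_plus)
  then show ?thesis by (simp add: add.commute[of _ "ennreal (max (-a) 0 * t + max (-b) 0)"] ennreal_add_left_cancel_le)
qed


lemma data_processing:
  fixes \<mu> \<nu> :: "'a::euclidean_space measure"
  assumes phi: "entropy_function \<phi>" and mu: "\<mu> \<in> finite_borel_measures" and nu: "\<nu> \<in> finite_borel_measures"
  shows "divergence \<phi> (proj \<theta> \<mu>) (proj \<theta> \<nu>) \<le> divergence \<phi> \<mu> \<nu>"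
proof -
  define T where "T = (\<lambda>x::'a. \<theta> \<bullet> x)"
  have smu: "sets \<mu> = sets borel" and snu: "sets \<nu> = sets borel"
    using mu nu by (auto simp: finite_borel_measures_def)
  have spmu: "space \<mu> = UNIV" and spnu: "space \<nu> = UNIV"
    using sets_eq_imp_space_eq[OF smu] sets_eq_imp_space_eq[OF snu] by auto
  have finmu: "emeasure \<mu> (space \<mu>) < \<infinity>" and finnu: "emeasure \<nu> (space \<nu>) < \<infinity>"
    using mu nu by (auto simp: finite_borel_measures_def)
  have Tb: "T \<in> borel_measurable borel"
    unfolding T_def by (intro borel_measurable_continuous_onI continuous_intros)
  have Tmu[measurable]: "T \<in> borel_measurable \<mu>" using Tb by (simp add: measurable_cong_sets[OF smu refl])
  have Tnu[measurable]: "T \<in> borel_measurable \<nu>" using Tb by (simp add: measurable_cong_sets[OF snu refl])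
  define TM where "TM = distr \<mu> borel T"
  define TN where "TN = distr \<nu> borel T"
  have TMeq: "proj \<theta> \<mu> = TM" and TNeq: "proj \<theta> \<nu> = TN"
    by (simp_all add: proj_def TM_def TN_def T_def)
  have sTM[simp]: "sets TM = sets borel" and sTN[simp]: "sets TN = sets borel"
    by (simp_all add: TM_def TN_def)
  have spTN[simp]: "space TN = UNIV" and spTM[simp]: "space TM = UNIV"
    by (simp_all add: TM_def TN_def)
  have TMB: "emeasure TM B = emeasure \<mu> (T -` B)" if "B \<in> sets borel" for B
    using that by (simp add: TM_def emeasure_distr spmu)
  have TNB: "emeasure TN B = emeasure \<nu> (T -` B)" if "B \<in> sets borel" for B
    using that by (simp add: TN_def emeasure_distr spnu)
  have preB_mu[measurable]: "T -` B \<in> sets \<mu>" if "B \<in> sets borel" for B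
    using measurable_sets[OF Tmu that] by (simp add: spmu)
  have preB_nu[measurable]: "T -` B \<in> sets \<nu>" if "B \<in> sets borel" for B
    using measurable_sets[OF Tnu that] by (simp add: spnu)
  have finTM: "finite_measure TM"
    by (rule finite_measureI) (use finmu in \<open>simp add: TMB spmu\<close>)
  have finTN: "finite_measure TN"
    by (rule finite_measureI) (use finnu in \<open>simp add: TNB spnu\<close>)
  interpret TN: finite_measure TN by (rule finTN)
  show ?thesis
    unfolding TMeq TNeq divergence_def[of \<phi> \<mu> \<nu>]
  proof (rule Inf_greatest, clarify)
    fix f :: "'a \<Rightarrow> real" and S
    assume f[measurable]: "f \<in> borel_measurable \<nu>" and f0: "\<forall>x. 0 \<le> f x"
      and S: "S \<in> sets \<nu>" and S0: "emeasure \<nu> S = 0"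
      and dec: "\<forall>A\<in>sets \<mu>. emeasure \<mu> (A - S) = (\<integral>\<^sup>+ x\<in>A. ennreal (f x) \<partial>\<nu>)"
    have Smu[measurable]: "S \<in> sets \<mu>" using S smu snu by simp
    have Snu[measurable]: "S \<in> sets \<nu>" using S .
    have phif[measurable]: "(\<lambda>x. \<phi> (f x)) \<in> borel_measurable \<nu>"
      using entropy_measurable[OF phi f] f0 by blast
    have decA: "emeasure \<mu> A = (\<integral>\<^sup>+ x\<in>A. ennreal (f x) \<partial>\<nu>) + emeasure \<mu> (A \<inter> S)"
      if "A \<in> sets \<mu>" for A
    proof -
      have "emeasure \<mu> (A - S) + emeasure \<mu> (A \<inter> S) = emeasure \<mu> ((A - S) \<union> (A \<inter> S))"
        by (rule plus_emeasure) (use that Smu in auto)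
      also have "(A - S) \<union> (A \<inter> S) = A" by blast
      finally have "emeasure \<mu> A = emeasure \<mu> (A - S) + emeasure \<mu> (A \<inter> S)" by simp
      then show ?thesis using dec that by simp
    qed
    obtain S' where S': "S' \<in> sets TN" "emeasure TN S' = 0"
      and S'max: "\<forall>B\<in>sets TN. emeasure TN B = 0 \<longrightarrow> emeasure TM (B - S') = 0"
      using null_max_set[OF finTM, of TN] by auto
    have S'b[measurable]: "S' \<in> sets borel" using S' by simp
    have nuS': "emeasure \<nu> (T -` S') = 0" using S' TNB by simp
    have nuS'n: "T -` S' \<in> null_sets \<nu>" using nuS' by (simp add: null_sets_def)
    define P' where "P' = density TM (indicator (- S'))"
    have cS'[measurable]: "- S' \<in> sets borel"
      using S'b by (metis Compl_eq_Diff_UNIV sets.compl_sets space_borel)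
    have indS': "indicator (- S') \<in> borel_measurable TM"
      using cS' by (subst measurable_cong_sets[OF sTM refl]) (rule borel_measurable_indicator)
    have P'B: "emeasure P' B = emeasure \<mu> (T -` (B - S'))" if B: "B \<in> sets borel" for B
    proof -
      have "emeasure P' B = (\<integral>\<^sup>+ y. indicator (- S') y * indicator B y \<partial>TM)"
        unfolding P'_def by (rule emeasure_density[OF indS']) (use B in simp)
      also have "\<dots> = (\<integral>\<^sup>+ y. indicator (B - S') y \<partial>TM)"
        by (intro nn_integral_cong) (auto split: split_indicator)
      also have "\<dots> = emeasure TM (B - S')" using B S'b by (intro nn_integral_indicator) auto
      finally show ?thesis using B S'b by (simp add: TMB)
    qed
    have sP'[simp]: "sets P' = sets TN" by (simp add: P'_def)
    have acP': "absolutely_continuous TN P'"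
      unfolding absolutely_continuous_def
    proof
      fix B assume "B \<in> null_sets TN"
      then have B: "B \<in> sets borel" "emeasure TN B = 0" by (auto simp: null_sets_def)
      have "emeasure P' B = emeasure TM (B - S')" using B P'B TMB by simp
      also have "\<dots> = 0" using S'max B by simp
      finally show "B \<in> null_sets P'" using B by (simp add: null_sets_def)
    qed
    define G where "G = RN_deriv TN P'"
    have G[measurable]: "G \<in> borel_measurable TN" by (simp add: G_def)
    have dG: "density TN G = P'" unfolding G_def by (rule TN.density_RN_deriv[OF acP' sP'])
    have iG: "(\<integral>\<^sup>+ y. G y * indicator B y \<partial>TN) = emeasure \<mu> (T -` (B - S'))"
      if "B \<in> sets borel" for B
      using emeasure_density[OF G, of B] that dG P'B by simp
    have intG: "(\<integral>\<^sup>+ y. G y \<partial>TN) \<noteq> \<infinity>"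
    proof -
      have "(\<integral>\<^sup>+ y. G y \<partial>TN) = (\<integral>\<^sup>+ y. G y * indicator UNIV y \<partial>TN)" by simp
      also have "\<dots> = emeasure \<mu> (T -` (UNIV - S'))" using iG[of UNIV] by simp
      also have "\<dots> \<le> emeasure \<mu> (space \<mu>)" by (rule emeasure_mono) (auto simp: spmu smu)
      finally show ?thesis using finmu by (auto simp: top_unique)
    qed
    have Gfin: "AE y in TN. G y \<noteq> \<infinity>" by (rule nn_integral_noteq_infinite[OF G intG])
    define g where "g = (\<lambda>y. enn2real (G y))"
    have g[measurable]: "g \<in> borel_measurable TN" unfolding g_def by measurable
    have g0: "\<forall>y. 0 \<le> g y" by (simp add: g_def)
    have AEg: "AE y in TN. ennreal (g y) = G y" using Gfin by eventually_elim (simp add: g_def ennreal_enn2real_if)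
    define P\<phi> where "P\<phi> = distr (density \<nu> (\<lambda>x. \<phi> (f x))) borel T"
    have P\<phi>B: "emeasure P\<phi> B = (\<integral>\<^sup>+ x. \<phi> (f x) * indicator (T -` B) x \<partial>\<nu>)" if "B \<in> sets borel" for B
      using that unfolding P\<phi>_def
      by (subst emeasure_distr) (auto simp: emeasure_density spnu)
    have sP\<phi>[simp]: "sets P\<phi> = sets TN" by (simp add: P\<phi>_def)
    have acP\<phi>: "absolutely_continuous TN P\<phi>"
      unfolding absolutely_continuous_def
    proof
      fix B assume "B \<in> null_sets TN"
      then have B: "B \<in> sets borel" "emeasure TN B = 0" by (auto simp: null_sets_def)
      then have "T -` B \<in> null_sets \<nu>" using TNB by (simp add: null_sets_def)
      then have "emeasure P\<phi> B = 0" using P\<phi>B[OF B(1)] nn_integral_null_set by simp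
      then show "B \<in> null_sets P\<phi>" using B by (simp add: null_sets_def)
    qed
    define \<Phi> where "\<Phi> = RN_deriv TN P\<phi>"
    have \<Phi>[measurable]: "\<Phi> \<in> borel_measurable TN" by (simp add: \<Phi>_def)
    have d\<Phi>: "density TN \<Phi> = P\<phi>" unfolding \<Phi>_def by (rule TN.density_RN_deriv[OF acP\<phi> sP\<phi>])
    have i\<Phi>: "(\<integral>\<^sup>+ y. \<Phi> y * indicator B y \<partial>TN) = (\<integral>\<^sup>+ x. \<phi> (f x) * indicator (T -` B) x \<partial>\<nu>)"
      if "B \<in> sets borel" for B
      using emeasure_density[OF \<Phi>, of B] that d\<Phi> P\<phi>B by simp
    define \<rho> where "\<rho> = distr (density \<mu> (indicator (S - T -` S'))) borel T"
    have \<rho>B: "emeasure \<rho> B = emeasure \<mu> (T -` (B - S') \<inter> S)" if "B \<in> sets borel" for B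
    proof -
      have "emeasure \<rho> B = (\<integral>\<^sup>+ x. indicator (S - T -` S') x * indicator (T -` B) x \<partial>\<mu>)"
        using that unfolding \<rho>_def by (subst emeasure_distr) (auto simp: emeasure_density spmu)
      also have "\<dots> = (\<integral>\<^sup>+ x. indicator (T -` (B - S') \<inter> S) x \<partial>\<mu>)"
        by (intro nn_integral_cong) (auto split: split_indicator)
      also have "\<dots> = emeasure \<mu> (T -` (B - S') \<inter> S)" using that by simp
      finally show ?thesis .
    qed
    have s\<rho>[simp]: "sets \<rho> = sets TN" by (simp add: \<rho>_def)
    have ac\<rho>: "absolutely_continuous TN \<rho>"
      unfolding absolutely_continuous_def
    proof
      fix B assume "B \<in> null_sets TN"
      then have B: "B \<in> sets borel" "emeasure TN B = 0" by (auto simp: null_sets_def)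
      have "emeasure \<rho> B \<le> emeasure \<mu> (T -` (B - S'))"
        using \<rho>B[OF B(1)] B(1) by (auto intro!: emeasure_mono)
      also have "\<dots> = emeasure TM (B - S')" using B by (simp add: TMB)
      also have "\<dots> = 0" using S'max B by simp
      finally show "B \<in> null_sets \<rho>" using B by (simp add: null_sets_def)
    qed
    define r where "r = RN_deriv TN \<rho>"
    have r[measurable]: "r \<in> borel_measurable TN" by (simp add: r_def)
    have dr: "density TN r = \<rho>" unfolding r_def by (rule TN.density_RN_deriv[OF ac\<rho> s\<rho>])
    have ir: "(\<integral>\<^sup>+ y. r y * indicator B y \<partial>TN) = emeasure \<mu> (T -` (B - S') \<inter> S)"
      if "B \<in> sets borel" for B
      using emeasure_density[OF r, of B] that dr \<rho>B by simp
    have B_mu: "T -` (B - S') \<in> sets \<mu>" "T -` (B - S') \<in> sets \<nu>" if "B \<in> sets borel" for B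
      using that S'b by (auto intro!: preB_mu preB_nu)
    have key: "AE y in TN. ennreal (max a 0) * G y + ennreal (max b 0)
        \<le> (\<Phi> y + phi_inf \<phi> * r y) + (ennreal (max (-a) 0) * G y + ennreal (max (-b) 0))"
      if ab: "\<forall>t\<ge>0. ennreal (a*t + b) \<le> \<phi> t" for a b :: real
    proof (rule AE_le_from_set_integrals)
      show "(\<lambda>y. ennreal (max a 0) * G y + ennreal (max b 0)) \<in> borel_measurable TN" by measurable
      show "(\<lambda>y. (\<Phi> y + phi_inf \<phi> * r y) + (ennreal (max (-a) 0) * G y + ennreal (max (-b) 0))) \<in> borel_measurable TN"
        by measurable
      have "(\<integral>\<^sup>+ y. ennreal (max a 0) * G y + ennreal (max b 0) \<partial>TN)
          = ennreal (max a 0) * (\<integral>\<^sup>+ y. G y \<partial>TN) + ennreal (max b 0) * emeasure TN (space TN)"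
        by (simp add: nn_integral_add nn_integral_cmult)
      then show "(\<integral>\<^sup>+ y. ennreal (max a 0) * G y + ennreal (max b 0) \<partial>TN) \<noteq> \<infinity>"
        using intG TN.emeasure_finite[of "space TN"] by (simp add: ennreal_mult_eq_top_iff)
      fix B assume "B \<in> sets TN"
      then have BTN[measurable]: "B \<in> sets TN" by simp
      then have B[measurable]: "B \<in> sets borel" by simp
      define A where "A = T -` (B - S')"
      have A[measurable]: "A \<in> sets \<mu>" "A \<in> sets \<nu>" using B_mu[OF B] by (auto simp: A_def)
      have TB[measurable]: "T -` B \<in> sets \<nu>" by (rule preB_nu[OF B])
      define ap where "ap = ennreal (max a 0)"
      define an where "an = ennreal (max (-a) 0)"
      define bp where "bp = ennreal (max b 0)"
      define bn where "bn = ennreal (max (-b) 0)"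
      define X1 where "X1 = (\<integral>\<^sup>+ x. ennreal (f x) * indicator A x \<partial>\<nu>)"
      define X2 where "X2 = emeasure \<mu> (A \<inter> S)"
      define X3 where "X3 = emeasure \<nu> A"
      define Y where "Y = (\<integral>\<^sup>+ x. \<phi> (f x) * indicator (T -` B) x \<partial>\<nu>)"
      define YA where "YA = (\<integral>\<^sup>+ x. \<phi> (f x) * indicator A x \<partial>\<nu>)"
      have muA: "emeasure \<mu> A = X1 + X2" unfolding X1_def X2_def using decA[OF A(1)] by simp
      have nuA: "emeasure \<nu> (T -` B) = X3"
      proof -
        have "A = T -` B - T -` S'" by (auto simp: A_def)
        then show ?thesis unfolding X3_def using emeasure_Diff_null_set[OF nuS'n TB] by simp
      qed
      have ir2: "(\<integral>\<^sup>+ y. r y * indicator B y \<partial>TN) = X2" using ir[OF B] by (simp add: X2_def A_def)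
      have LHS: "(\<integral>\<^sup>+ y. (ap * G y + bp) * indicator B y \<partial>TN) = ap * (X1 + X2) + bp * X3"
      proof -
        have "(\<integral>\<^sup>+ y. (ap * G y + bp) * indicator B y \<partial>TN)
            = (\<integral>\<^sup>+ y. ap * (G y * indicator B y) + bp * indicator B y \<partial>TN)"
          by (intro nn_integral_cong) (simp add: distrib_right mult.assoc)
        also have "\<dots> = ap * (\<integral>\<^sup>+ y. G y * indicator B y \<partial>TN) + bp * emeasure TN B"
          by (simp add: nn_integral_add nn_integral_cmult)
        also have "\<dots> = ap * (X1 + X2) + bp * X3"
          using iG[OF B] TNB[OF B] muA nuA by (simp add: A_def)
        finally show ?thesis .
      qed
      have RHS: "(\<integral>\<^sup>+ y. ((\<Phi> y + phi_inf \<phi> * r y) + (an * G y + bn)) * indicator B y \<partial>TN)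
          = Y + phi_inf \<phi> * X2 + (an * (X1 + X2) + bn * X3)"
      proof -
        have "(\<integral>\<^sup>+ y. ((\<Phi> y + phi_inf \<phi> * r y) + (an * G y + bn)) * indicator B y \<partial>TN)
            = (\<integral>\<^sup>+ y. \<Phi> y * indicator B y + phi_inf \<phi> * (r y * indicator B y)
                 + (an * (G y * indicator B y) + bn * indicator B y) \<partial>TN)"
          by (intro nn_integral_cong) (simp add: distrib_right mult.assoc)
        also have "\<dots> = (\<integral>\<^sup>+ y. \<Phi> y * indicator B y \<partial>TN) + phi_inf \<phi> * (\<integral>\<^sup>+ y. r y * indicator B y \<partial>TN)
                 + (an * (\<integral>\<^sup>+ y. G y * indicator B y \<partial>TN) + bn * emeasure TN B)"
          by (simp add: nn_integral_add nn_integral_cmult)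
        also have "\<dots> = Y + phi_inf \<phi> * X2 + (an * (X1 + X2) + bn * X3)"
          using i\<Phi>[OF B] ir2 iG[OF B] TNB[OF B] muA nuA by (simp add: A_def Y_def)
        finally show ?thesis .
      qed
      have pw: "(\<integral>\<^sup>+ x. (ap * ennreal (f x) + bp) * indicator A x \<partial>\<nu>)
          \<le> (\<integral>\<^sup>+ x. (\<phi> (f x) + (an * ennreal (f x) + bn)) * indicator A x \<partial>\<nu>)"
        by (intro nn_integral_mono mult_right_mono)
           (use ab f0 in \<open>auto simp: ap_def an_def bp_def bn_def intro!: minorant_split\<close>)
      have pwL: "(\<integral>\<^sup>+ x. (ap * ennreal (f x) + bp) * indicator A x \<partial>\<nu>) = ap * X1 + bp * X3"
      proof -
        have "(\<integral>\<^sup>+ x. (ap * ennreal (f x) + bp) * indicator A x \<partial>\<nu>)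
            = (\<integral>\<^sup>+ x. ap * (ennreal (f x) * indicator A x) + bp * indicator A x \<partial>\<nu>)"
          by (intro nn_integral_cong) (simp add: distrib_right mult.assoc)
        also have "\<dots> = ap * X1 + bp * X3"
          by (simp add: nn_integral_add nn_integral_cmult X1_def X3_def)
        finally show ?thesis .
      qed
      have pwR: "(\<integral>\<^sup>+ x. (\<phi> (f x) + (an * ennreal (f x) + bn)) * indicator A x \<partial>\<nu>) = YA + (an * X1 + bn * X3)"
      proof -
        have "(\<integral>\<^sup>+ x. (\<phi> (f x) + (an * ennreal (f x) + bn)) * indicator A x \<partial>\<nu>)
            = (\<integral>\<^sup>+ x. \<phi> (f x) * indicator A x + (an * (ennreal (f x) * indicator A x) + bn * indicator A x) \<partial>\<nu>)"
          by (intro nn_integral_cong) (simp add: distrib_right mult.assoc)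
        also have "\<dots> = YA + (an * X1 + bn * X3)"
          by (simp add: nn_integral_add nn_integral_cmult X1_def X3_def YA_def)
        finally show ?thesis .
      qed
      have YAY: "YA \<le> Y" unfolding YA_def Y_def
        by (intro nn_integral_mono mult_left_mono) (auto simp: A_def split: split_indicator)
      have apX2: "ap * X2 \<le> phi_inf \<phi> * X2"
        unfolding ap_def using minorant_slope[OF ab]
        by (intro mult_right_mono) (auto simp: max_def ennreal_neg)
      have pwX: "ap * X1 + bp * X3 \<le> YA + (an * X1 + bn * X3)" using pw pwL pwR by simp
      have "ap * (X1 + X2) + bp * X3 = (ap * X1 + bp * X3) + ap * X2" by (simp add: algebra_simps)
      also have "\<dots> \<le> (YA + (an * X1 + bn * X3)) + phi_inf \<phi> * X2"
        by (rule add_mono[OF pwX apX2])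
      also have "\<dots> \<le> (Y + (an * X1 + bn * X3)) + phi_inf \<phi> * X2"
        using YAY by (intro add_mono) auto
      also have "\<dots> \<le> Y + phi_inf \<phi> * X2 + (an * (X1 + X2) + bn * X3)"
        by (simp add: algebra_simps add_increasing2)
      finally show "(\<integral>\<^sup>+ y. (ennreal (max a 0) * G y + ennreal (max b 0)) * indicator B y \<partial>TN)
          \<le> (\<integral>\<^sup>+ y. ((\<Phi> y + phi_inf \<phi> * r y) + (ennreal (max (-a) 0) * G y + ennreal (max (-b) 0))) * indicator B y \<partial>TN)"
        using LHS RHS by (simp add: ap_def an_def bp_def bn_def)
    qed
    have AEall: "AE y in TN. \<forall>q::rat \<times> rat.
        (\<forall>t\<ge>0. ennreal (real_of_rat (fst q) * t + real_of_rat (snd q)) \<le> \<phi> t) \<longrightarrow>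
        ennreal (max (real_of_rat (fst q)) 0) * G y + ennreal (max (real_of_rat (snd q)) 0)
        \<le> (\<Phi> y + phi_inf \<phi> * r y) + (ennreal (max (- real_of_rat (fst q)) 0) * G y
             + ennreal (max (- real_of_rat (snd q)) 0))"
      unfolding AE_all_countable
    proof
      fix q :: "rat \<times> rat"
      show "AE y in TN. (\<forall>t\<ge>0. ennreal (real_of_rat (fst q) * t + real_of_rat (snd q)) \<le> \<phi> t) \<longrightarrow>
        ennreal (max (real_of_rat (fst q)) 0) * G y + ennreal (max (real_of_rat (snd q)) 0)
        \<le> (\<Phi> y + phi_inf \<phi> * r y) + (ennreal (max (- real_of_rat (fst q)) 0) * G y
             + ennreal (max (- real_of_rat (snd q)) 0))"
        using key[of "real_of_rat (fst q)" "real_of_rat (snd q)"]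
        by (cases "\<forall>t\<ge>0. ennreal (real_of_rat (fst q) * t + real_of_rat (snd q)) \<le> \<phi> t") auto
    qed
    have phig: "AE y in TN. \<phi> (g y) \<le> \<Phi> y + phi_inf \<phi> * r y"
      using AEall AEg
    proof eventually_elim
      case (elim y)
      show ?case
      proof (rule phi_le_from_minorants[OF phi])
        show "0 \<le> g y" by (simp add: g_def)
        fix q1 q2 assume m: "\<forall>t\<ge>0. ennreal (real_of_rat q1 * t + real_of_rat q2) \<le> \<phi> t"
        have "ennreal (max (real_of_rat q1) 0) * ennreal (g y) + ennreal (max (real_of_rat q2) 0)
            \<le> (\<Phi> y + phi_inf \<phi> * r y) + (ennreal (max (- real_of_rat q1) 0) * ennreal (g y)
                 + ennreal (max (- real_of_rat q2) 0))"
          using elim(1)[rule_format, of "(q1, q2)"] m elim(2) by simp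
        then show "ennreal (real_of_rat q1 * g y + real_of_rat q2) \<le> \<Phi> y + phi_inf \<phi> * r y"
          by (rule minorant_unsplit) (simp add: g_def)
      qed
    qed
    have int1: "(\<integral>\<^sup>+ y. \<phi> (g y) \<partial>TN)
        \<le> (\<integral>\<^sup>+ x. \<phi> (f x) \<partial>\<nu>) + phi_inf \<phi> * emeasure \<mu> (T -` (UNIV - S') \<inter> S)"
    proof -
      have "(\<integral>\<^sup>+ y. \<phi> (g y) \<partial>TN) \<le> (\<integral>\<^sup>+ y. \<Phi> y + phi_inf \<phi> * r y \<partial>TN)"
        by (rule nn_integral_mono_AE[OF phig])
      also have "\<dots> = (\<integral>\<^sup>+ y. \<Phi> y * indicator UNIV y \<partial>TN) + phi_inf \<phi> * (\<integral>\<^sup>+ y. r y * indicator UNIV y \<partial>TN)"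
        by (simp add: nn_integral_add nn_integral_cmult)
      also have "\<dots> = (\<integral>\<^sup>+ x. \<phi> (f x) \<partial>\<nu>) + phi_inf \<phi> * emeasure \<mu> (T -` (UNIV - S') \<inter> S)"
        using i\<Phi>[of UNIV] ir[of UNIV] by simp
      finally show ?thesis .
    qed
    have TMS': "emeasure TM S' = emeasure \<mu> (T -` S' \<inter> S)"
    proof -
      have "emeasure TM S' = emeasure \<mu> (T -` S')" using S'b by (simp add: TMB)
      also have "\<dots> = (\<integral>\<^sup>+ x. ennreal (f x) * indicator (T -` S') x \<partial>\<nu>) + emeasure \<mu> (T -` S' \<inter> S)"
        using decA[OF preB_mu[OF S'b]] by simp
      also have "(\<integral>\<^sup>+ x. ennreal (f x) * indicator (T -` S') x \<partial>\<nu>) = 0"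
        by (rule nn_integral_null_set[OF nuS'n])
      finally show ?thesis by simp
    qed
    have splitS: "emeasure \<mu> (T -` (UNIV - S') \<inter> S) + emeasure \<mu> (T -` S' \<inter> S) = emeasure \<mu> S"
    proof -
      have "emeasure \<mu> (T -` (UNIV - S') \<inter> S) + emeasure \<mu> (T -` S' \<inter> S)
          = emeasure \<mu> ((T -` (UNIV - S') \<inter> S) \<union> (T -` S' \<inter> S))"
        by (rule plus_emeasure) (use S'b preB_mu Smu cS' in \<open>auto\<close>)
      also have "(T -` (UNIV - S') \<inter> S) \<union> (T -` S' \<inter> S) = S" by blast
      finally show ?thesis .
    qed
    have decg: "\<forall>A\<in>sets TM. emeasure TM (A - S') = (\<integral>\<^sup>+ y\<in>A. ennreal (g y) \<partial>TN)"
    proof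
      fix A assume "A \<in> sets TM"
      then have A: "A \<in> sets borel" by simp
      have "emeasure TM (A - S') = emeasure \<mu> (T -` (A - S'))" using A S'b by (simp add: TMB)
      also have "\<dots> = (\<integral>\<^sup>+ y. G y * indicator A y \<partial>TN)" using iG[OF A] by simp
      also have "\<dots> = (\<integral>\<^sup>+ y. ennreal (g y) * indicator A y \<partial>TN)"
        using AEg by (intro nn_integral_cong_AE) (auto elim!: eventually_mono)
      finally show "emeasure TM (A - S') = (\<integral>\<^sup>+ y\<in>A. ennreal (g y) \<partial>TN)" .
    qed
    have "divergence \<phi> TM TN \<le> (\<integral>\<^sup>+ y. \<phi> (g y) \<partial>TN) + phi_inf \<phi> * emeasure TM S'"
      unfolding divergence_def
      apply (rule Inf_lower)
      apply (rule CollectI)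
      apply (rule exI[of _ g])
      apply (rule exI[of _ S'])
      using g g0 S' decg by auto
    also have "\<dots> \<le> (\<integral>\<^sup>+ x. \<phi> (f x) \<partial>\<nu>) + phi_inf \<phi> * emeasure \<mu> (T -` (UNIV - S') \<inter> S)
                   + phi_inf \<phi> * emeasure \<mu> (T -` S' \<inter> S)"
      using int1 TMS' by (intro add_mono) auto
    also have "\<dots> = (\<integral>\<^sup>+ x. \<phi> (f x) \<partial>\<nu>) + phi_inf \<phi> * emeasure \<mu> S"
      using splitS by (simp add: add.assoc distrib_left[symmetric])
    finally show "divergence \<phi> TM TN \<le> (\<integral>\<^sup>+ x. \<phi> (f x) \<partial>\<nu>) + phi_inf \<phi> * emeasure \<mu> S" .
  qed
qed



lemma nn_integral_add_const_le:
  fixes F :: "'b \<Rightarrow> ennreal"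
  shows "(\<integral>\<^sup>+x. F x + c \<partial>M) \<le> (\<integral>\<^sup>+x. F x \<partial>M) + c * emeasure M (space M)"
proof -
  have "integral\<^sup>S M g \<le> (\<integral>\<^sup>+x. F x \<partial>M) + c * emeasure M (space M)"
    if g: "simple_function M g" "g \<le> (\<lambda>x. F x + c)" for g
  proof -
    let ?g' = "\<lambda>x. (if c = top then 0 else g x - c)"
    have sg': "simple_function M ?g'" using g(1) by (rule simple_function_compose1)
    have le1: "g x \<le> ?g' x + c" for x
      by (simp add: diff_add_self_ennreal nle_le)
    have le2: "?g' x \<le> F x" for x using g(2) unfolding le_fun_def
      by (auto simp: ennreal_minus_le_iff add.commute)
    have "integral\<^sup>S M g \<le> integral\<^sup>S M (\<lambda>x. ?g' x + c)"
      by (rule simple_integral_mono) (use g sg' le1 in auto)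
    also have "\<dots> = integral\<^sup>S M ?g' + integral\<^sup>S M (\<lambda>x. c)"
      by (rule simple_integral_add) (use sg' in auto)
    also have "integral\<^sup>S M ?g' = integral\<^sup>N M ?g'"
      using sg' by (simp add: nn_integral_eq_simple_integral)
    also have "\<dots> \<le> (\<integral>\<^sup>+x. F x \<partial>M)" by (rule nn_integral_mono) (use le2 in auto)
    also have "integral\<^sup>S M (\<lambda>x. c) = c * emeasure M (space M)"
      by simp
    finally show ?thesis by (simp add: add_mono)
  qed
  then show ?thesis unfolding nn_integral_def by (auto intro!: SUP_least)
qed


lemma UOT_le:
  fixes \<alpha> \<beta> \<pi>1 \<pi>2 :: "'a::euclidean_space measure"
  assumes "entropy_function \<phi>1" "entropy_function \<phi>2"
    and "\<alpha> \<in> finite_borel_measures" "\<beta> \<in> finite_borel_measures"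
    and "\<pi>1 \<in> finite_borel_measures" "\<pi>2 \<in> finite_borel_measures"
  shows "UOT C \<phi>1 \<phi>2 (proj \<theta> \<alpha>) (proj \<theta> \<beta>) \<le> OT C (proj \<theta> \<pi>1) (proj \<theta> \<pi>2)
           + (divergence \<phi>1 \<pi>1 \<alpha> + divergence \<phi>2 \<pi>2 \<beta>)"
proof -
  let ?K = "divergence \<phi>1 \<pi>1 \<alpha> + divergence \<phi>2 \<pi>2 \<beta>"
  let ?U = "UOT C \<phi>1 \<phi>2 (proj \<theta> \<alpha>) (proj \<theta> \<beta>)"
  have *: "?U \<le> (\<integral>\<^sup>+z. C z \<partial>\<pi>) + ?K"
    if \<pi>: "\<pi> \<in> finite_borel_measures" "distr \<pi> borel fst = proj \<theta> \<pi>1" "distr \<pi> borel snd = proj \<theta> \<pi>2" for \<pi>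
  proof -
    have "?U \<le> (\<integral>\<^sup>+z. C z \<partial>\<pi>) + divergence \<phi>1 (distr \<pi> borel fst) (proj \<theta> \<alpha>)
          + divergence \<phi>2 (distr \<pi> borel snd) (proj \<theta> \<beta>)"
      unfolding UOT_def using \<pi>(1) by (intro Inf_lower) blast
    also have "\<dots> \<le> (\<integral>\<^sup>+z. C z \<partial>\<pi>) + divergence \<phi>1 \<pi>1 \<alpha> + divergence \<phi>2 \<pi>2 \<beta>"
      unfolding \<pi>(2,3) using assms by (intro add_mono data_processing order_refl)
    finally show ?thesis by (simp add: add.assoc)
  qed
  show ?thesis
  proof (cases "?K = top")
    case True then show ?thesis by (subst True) simp
  next
    case False
    have "?U - ?K \<le> OT C (proj \<theta> \<pi>1) (proj \<theta> \<pi>2)"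
      unfolding OT_def
    proof (rule Inf_greatest, clarify)
      fix \<pi> assume "\<pi> \<in> finite_borel_measures" "distr \<pi> borel fst = proj \<theta> \<pi>1" "distr \<pi> borel snd = proj \<theta> \<pi>2"
      from *[OF this] show "?U - ?K \<le> (\<integral>\<^sup>+z. C z \<partial>\<pi>)" using False
        by (simp add: ennreal_minus_le_iff add.commute)
    qed
    then show ?thesis using False by (simp add: ennreal_minus_le_iff add.commute)
  qed
qed

lemma unif_sphere_le1: "emeasure (unif_sphere :: 'a::euclidean_space measure) (space unif_sphere) \<le> 1"
proof -
  have m: "(\<lambda>x::'a. x /\<^sub>R norm x) \<in> borel_measurable (uniform_measure lborel (ball 0 1))"
    by simp
  have "emeasure (unif_sphere :: 'a measure) (space unif_sphere)
       = emeasure (uniform_measure lborel (ball (0::'a) 1)) UNIV"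
    unfolding unif_sphere_def using m by (simp add: emeasure_distr)
  also have "\<dots> = emeasure lborel (ball (0::'a) 1) / emeasure lborel (ball (0::'a) 1)"
    by simp
  also have "\<dots> \<le> 1"
    by (metis divide_le_posI_ennreal ennreal_zero_divide mult.right_neutral nle_le not_gr_zero not_one_le_zero)
  finally show ?thesis .
qed

theorem theorem6:
  fixes X :: "'a::euclidean_space set" and R :: real
    and \<alpha> \<beta> :: "'a measure"
    and C1 :: "real \<times> real \<Rightarrow> ennreal" and \<phi>1 \<phi>2 :: "real \<Rightarrow> ennreal"
  assumes "entropy_function \<phi>1" and "entropy_function \<phi>2"
    and "\<forall>c. closed {z. C1 z \<le> c}"
    and "compact X" and "X \<subseteq> cball 0 R"
    and "\<alpha> \<in> finite_borel_measures" and "emeasure \<alpha> (UNIV - X) = 0"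
    and "\<beta> \<in> finite_borel_measures" and "emeasure \<beta> (UNIV - X) = 0"
  shows "SUOT C1 \<phi>1 \<phi>2 \<alpha> \<beta> \<le> USOT C1 \<phi>1 \<phi>2 \<alpha> \<beta>"
  unfolding USOT_def
proof (rule Inf_greatest, clarify)
  fix \<pi>1 \<pi>2 :: "'a measure"
  assume p: "\<pi>1 \<in> finite_borel_measures" "\<pi>2 \<in> finite_borel_measures"
  let ?K = "divergence \<phi>1 \<pi>1 \<alpha> + divergence \<phi>2 \<pi>2 \<beta>"
  have "SUOT C1 \<phi>1 \<phi>2 \<alpha> \<beta> \<le> (\<integral>\<^sup>+\<theta>. OT C1 (proj \<theta> \<pi>1) (proj \<theta> \<pi>2) + ?K \<partial>unif_sphere)"
    unfolding SUOT_def using assms p by (intro nn_integral_mono UOT_le) auto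
  also have "\<dots> \<le> SOT C1 \<pi>1 \<pi>2 + ?K * emeasure (unif_sphere::'a measure) (space (unif_sphere::'a measure))"
    unfolding SOT_def by (rule nn_integral_add_const_le[where F="\<lambda>\<theta>. OT C1 (proj \<theta> \<pi>1) (proj \<theta> \<pi>2)"])
  also have "\<dots> \<le> SOT C1 \<pi>1 \<pi>2 + ?K * 1"
    by (intro add_mono mult_left_mono unif_sphere_le1) auto
  finally show "SUOT C1 \<phi>1 \<phi>2 \<alpha> \<beta> \<le> SOT C1 \<pi>1 \<pi>2 + divergence \<phi>1 \<pi>1 \<alpha> + divergence \<phi>2 \<pi>2 \<beta>"
    by (simp add: add.assoc)
qed


end
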